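(* Consider the set of all bubbles, with output and input colours as defined in the context. Equip it with the partial composition $\mathfrak B_1\circ_i\mathfrak B_2$ given by the composition of the operad $\mathrm{CNCB}$ and defined exactly when $\mathrm{Out}(\mathfrak B_2)=\mathrm{In}_i(\mathfrak B_1)$, and add two units $\mathbf 1_1,\mathbf 1_2$ (where $\mathbf 1_c$ has arity $1$ and output and input colour $c$). This forms a $2$-coloured operad $\mathrm{Bulle}$. In particular, whenever $\mathrm{Out}(\mathfrak B_2)=\mathrm{In}_i(\mathfrak B_1)$, the $\mathrm{CNCB}$-composite $\mathfrak B_1\circ_i\mathfrak B_2$ is again a bubble.
   Context: For $n\ge2$, a bicoloured noncrossing configuration (BNC) of size $n$ is a regular polygon with $n+1$ vertices numbered $1,\dots,n+1$ clockwise, together with two disjoint sets of arcs, blue arcs and red arcs. An arc is a pair $(i,j)$ with $1\le i<j\le n+1$. The arcs $(i,i+1)$, $1\le i\le n$, are the edges ($(i,i+1)$ is the $i$th edge), $(1,n+1)$ is the base, and all other arcs are diagonals. Coloured (blue or red) arcs must be pairwise noncrossing, where $(i,j)$ and $(k,l)$ cross iff $i<k<j<l$ or $k<i<l<j$, and red arcs must be diagonals. Other arcs are uncoloured. There is one BNC of size $1$, a single blue arc. The operad $\mathrm{CNCB}$ has the BNCs as elements (arity = size). Its composition $\mathfrak C\circ_i\mathfrak D$ ($\mathfrak C$ of size $n$, $\mathfrak D$ of size $m$) glues the base of $\mathfrak D$ onto the $i$th edge of $\mathfrak C$. Arcs $(a,b)$ of $\mathfrak C$ become $(\sigma(a),\sigma(b))$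 with $\sigma(v)=v$ for $v\le i$ and $\sigma(v)=v+m-1$ for $v>i$, and arcs $(a,b)$ of $\mathfrak D$ become $(a+i-1,b+i-1)$; all keep their colours. The exception is the glued arc $(i,i+m)$, which is red if the $i$th edge of $\mathfrak C$ and the base of $\mathfrak D$ are both uncoloured, blue if both are blue, and uncoloured otherwise. A bubble is a BNC of size at least $2$ with no coloured diagonal. A BNC is based if its base is blue. For a bubble $\mathfrak B$ of size $n$, its output colour is $\mathrm{Out}(\mathfrak B)=1$ if $\mathfrak B$ is based and $2$ otherwise. Its $i$th input colour $\mathrm{In}_i(\mathfrak B)$, for $i\in[n]$, is $1$ if the $i$th edge of $\mathfrak B$ is uncoloured and $2$ if it is blue. *)

theory Defs
  imports Main
begin

text \<open>A BNC of size n: polygon with vertices 1..n+1, a set of blue arcs and a set of red arcs.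
  Arcs are pairs (i,j) with 1 <= i < j <= n+1.\<close>

record bnc =
  sz   :: nat
  blue :: "(nat \<times> nat) set"
  red  :: "(nat \<times> nat) set"

definition is_arc :: "nat \<Rightarrow> nat \<times> nat \<Rightarrow> bool" where
  "is_arc n a \<longleftrightarrow> 1 \<le> fst a \<and> fst a < snd a \<and> snd a \<le> n + 1"

definition is_edge :: "nat \<Rightarrow> nat \<times> nat \<Rightarrow> bool" where
  "is_edge n a \<longleftrightarrow> (\<exists>i. 1 \<le> i \<and> i \<le> n \<and> a = (i, i + 1))"

definition is_base :: "nat \<Rightarrow> nat \<times> nat \<Rightarrow> bool" where
  "is_base n a \<longleftrightarrow> a = (1, n + 1)"

definition is_diagonal :: "nat \<Rightarrow> nat \<times> nat \<Rightarrow> bool" where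
  "is_diagonal n a \<longleftrightarrow> is_arc n a \<and> \<not> is_edge n a \<and> \<not> is_base n a"

definition crosses :: "nat \<times> nat \<Rightarrow> nat \<times> nat \<Rightarrow> bool" where
  "crosses a b \<longleftrightarrow>
     (fst a < fst b \<and> fst b < snd a \<and> snd a < snd b) \<or>
     (fst b < fst a \<and> fst a < snd b \<and> snd b < snd a)"

definition is_bnc :: "bnc \<Rightarrow> bool" where
  "is_bnc C \<longleftrightarrow>
     (sz C \<ge> 2 \<and>
      (\<forall>a \<in> blue C. is_arc (sz C) a) \<and>
      (\<forall>a \<in> red C. is_diagonal (sz C) a) \<and>
      blue C \<inter> red C = {} \<and>
      (\<forall>a \<in> blue C \<union> red C. \<forall>b \<in> blue C \<union> red C. \<not> crosses a b))
     \<or> C = \<lparr>sz = 1, blue = {(1, 2)}, red = {}\<rparr>"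

definition cncb_comp :: "bnc \<Rightarrow> nat \<Rightarrow> bnc \<Rightarrow> bnc" where
  "cncb_comp C i D =
     (let n = sz C; m = sz D;
          \<sigma> = (\<lambda>v::nat. if v \<le> i then v else v + m - 1);
          mapC = (\<lambda>(a, b). (\<sigma> a, \<sigma> b));
          shD = (\<lambda>(a, b). (a + i - 1, b + i - 1));
          g = (i, i + m);
          edgeC = (i, i + 1);
          baseD = (1, m + 1);
          glue_blue = (edgeC \<in> blue C \<and> baseD \<in> blue D);
          glue_red = (edgeC \<notin> blue C \<and> edgeC \<notin> red C \<and> baseD \<notin> blue D \<and> baseD \<notin> red D)
      in \<lparr> sz = n + m - 1,
           blue = ((mapC ` blue C \<union> shD ` blue D) - {g}) \<union> (if glue_blue then {g} else {}),
           red  = ((mapC ` red C \<union> shD ` red D) - {g}) \<union> (if glue_red then {g} else {}) \<rparr>)"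

definition is_bubble :: "bnc \<Rightarrow> bool" where
  "is_bubble B \<longleftrightarrow> is_bnc B \<and> sz B \<ge> 2 \<and>
     (\<forall>a \<in> blue B \<union> red B. \<not> is_diagonal (sz B) a)"

definition based :: "bnc \<Rightarrow> bool" where
  "based B \<longleftrightarrow> (1, sz B + 1) \<in> blue B"

definition Out :: "bnc \<Rightarrow> nat" where
  "Out B = (if based B then 1 else 2)"

definition In :: "bnc \<Rightarrow> nat \<Rightarrow> nat" where
  "In B i = (if (i, i + 1) \<in> blue B then 2 else 1)"

datatype bulle = Unit nat | Bub bnc

definition Bulle :: "bulle set" where
  "Bulle = {Unit 1, Unit 2} \<union> Bub ` {B. is_bubble B}"

fun arity :: "bulle \<Rightarrow> nat" where
  "arity (Unit c) = 1"
| "arity (Bub B) = sz B"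

fun out :: "bulle \<Rightarrow> nat" where
  "out (Unit c) = c"
| "out (Bub B) = Out B"

fun inp :: "bulle \<Rightarrow> nat \<Rightarrow> nat" where
  "inp (Unit c) j = c"
| "inp (Bub B) j = In B j"

text \<open>Partial composition (meaningful when 1 <= i <= arity x and out y = inp x i).\<close>
fun bcomp :: "bulle \<Rightarrow> nat \<Rightarrow> bulle \<Rightarrow> bulle" where
  "bcomp (Unit c) i y = y"
| "bcomp (Bub B) i (Unit c) = Bub B"
| "bcomp (Bub B1) i (Bub B2) = Bub (cncb_comp B1 i B2)"

end

theory Submission
  imports Defs
begin


definition eb :: "nat \<Rightarrow> nat \<times> nat \<Rightarrow> bool" where
  "eb N a \<longleftrightarrow> (\<exists>k. 1 \<le> k \<and> k \<le> N \<and> a = (k, k+1)) \<or> a = (1, N+1)"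

lemma eb_not_cross: "eb N a \<Longrightarrow> eb N b \<Longrightarrow> \<not> crosses a b"
  unfolding eb_def crosses_def by auto

lemma bubble_char: "is_bubble B \<longleftrightarrow> sz B \<ge> 2 \<and> red B = {} \<and> (\<forall>a\<in>blue B. eb (sz B) a)"
proof
  assume b: "is_bubble B"
  then have s: "sz B \<ge> 2" unfolding is_bubble_def by auto
  then have bn: "(\<forall>a \<in> blue B. is_arc (sz B) a) \<and> (\<forall>a \<in> red B. is_diagonal (sz B) a)"
    using b unfolding is_bubble_def is_bnc_def by auto
  have nd: "\<forall>a \<in> blue B \<union> red B. \<not> is_diagonal (sz B) a" using b unfolding is_bubble_def by auto
  have "red B = {}" using bn nd by auto
  moreover have "\<forall>a\<in>blue B. eb (sz B) a"
  proof
    fix a assume a: "a \<in> blue B"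
    then have "is_arc (sz B) a" "\<not> is_diagonal (sz B) a" using bn nd by auto
    then show "eb (sz B) a" unfolding is_diagonal_def is_edge_def is_base_def eb_def by auto
  qed
  ultimately show "sz B \<ge> 2 \<and> red B = {} \<and> (\<forall>a\<in>blue B. eb (sz B) a)" using s by auto
next
  assume h: "sz B \<ge> 2 \<and> red B = {} \<and> (\<forall>a\<in>blue B. eb (sz B) a)"
  have arc: "\<forall>a \<in> blue B. is_arc (sz B) a" using h unfolding eb_def is_arc_def by auto
  have nd: "\<forall>a \<in> blue B. \<not> is_diagonal (sz B) a" using h unfolding eb_def is_diagonal_def is_edge_def is_base_def by auto
  have nc: "\<forall>a \<in> blue B \<union> red B. \<forall>b \<in> blue B \<union> red B. \<not> crosses a b"
    using h eb_not_cross by (metis Un_empty_right)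
  have "is_bnc B" unfolding is_bnc_def using h arc nc by auto
  then show "is_bubble B" unfolding is_bubble_def using h nd by auto
qed

lemma bubble_eq:
  assumes "is_bubble A" "is_bubble B" "sz A = sz B" "based A \<longleftrightarrow> based B"
    "\<And>k. 1 \<le> k \<Longrightarrow> k \<le> sz A \<Longrightarrow> ((k,k+1) \<in> blue A \<longleftrightarrow> (k,k+1) \<in> blue B)"
  shows "A = B"
proof -
  have cA: "red A = {}" "\<forall>a\<in>blue A. eb (sz A) a" and cB: "red B = {}" "\<forall>a\<in>blue B. eb (sz B) a"
    using assms(1,2) unfolding bubble_char by simp_all
  have "blue A = blue B"
  proof (intro set_eqI iffI)
    fix x assume x: "x \<in> blue A"
    from cA(2) x have "eb (sz A) x" by blast
    then consider k where "1\<le>k" "k\<le>sz A" "x=(k,k+1)" | "x=(1,sz A+1)" unfolding eb_def by blast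
    then show "x \<in> blue B"
    proof cases
      case 1 then show ?thesis using assms(5) x by blast
    next
      case 2 then show ?thesis using assms(3,4) x unfolding based_def by simp
    qed
  next
    fix x assume x: "x \<in> blue B"
    from cB(2) x have "eb (sz B) x" by blast
    then consider k where "1\<le>k" "k\<le>sz A" "x=(k,k+1)" | "x=(1,sz A+1)" unfolding eb_def using assms(3) by auto
    then show "x \<in> blue A"
    proof cases
      case 1 then show ?thesis using assms(5) x by blast
    next
      case 2 then show ?thesis using assms(3,4) x unfolding based_def by simp
    qed
  qed
  then show ?thesis using cA cB assms(3) by (cases A, cases B) auto
qed

definition sg :: "nat \<Rightarrow> nat \<Rightarrow> nat \<Rightarrow> nat" where
  "sg i m v = (if v \<le> i then v else v + m - 1)"

lemma comp_eq:
  assumes "is_bubble B1" "is_bubble B2" "1 \<le> i" "i \<le> sz B1" "Out B2 = In B1 i"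
  shows "cncb_comp B1 i B2 = \<lparr>sz = sz B1 + sz B2 - 1,
     blue = ((\<lambda>(a,b). (sg i (sz B2) a, sg i (sz B2) b)) ` blue B1 \<union> (\<lambda>(a,b). (a+i-1, b+i-1)) ` blue B2) - {(i, i + sz B2)},
     red = {}\<rparr>"
proof -
  have r: "red B1 = {}" "red B2 = {}" using assms(1,2) unfolding bubble_char by simp_all
  have c: "(i,i+1) \<in> blue B1 \<longleftrightarrow> (1, sz B2 + 1) \<notin> blue B2"
    using assms(5) unfolding Out_def In_def based_def by (cases "(i,i+1) \<in> blue B1"; cases "(1, sz B2 + 1) \<in> blue B2"; simp)
  have sgf: "(\<lambda>v. if v \<le> i then v else v + sz B2 - 1) = sg i (sz B2)" by (simp add: sg_def fun_eq_iff)
  have gb: "\<not> ((i,i+1) \<in> blue B1 \<and> (1, sz B2 + 1) \<in> blue B2)" using c by blast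
  have gr: "\<not> ((i,i+1) \<notin> blue B1 \<and> (i,i+1) \<notin> red B1 \<and> (1, sz B2 + 1) \<notin> blue B2 \<and> (1, sz B2 + 1) \<notin> red B2)" using c by blast
  show ?thesis unfolding cncb_comp_def Let_def sg_def using r gb gr by (simp only: empty_iff simp_thms if_False Un_empty_right Diff_empty Un_empty_left image_empty empty_Diff)
qed


lemma bub_blue:
  assumes "is_bubble B" "(a,b) \<in> blue B"
  shows "(1 \<le> a \<and> a \<le> sz B \<and> b = a+1) \<or> (a = 1 \<and> b = sz B + 1)"
  using assms unfolding bubble_char eb_def by fastforce

locale cmp =
  fixes B1 B2 i
  assumes b1: "is_bubble B1" and b2: "is_bubble B2" and i1: "1 \<le> i" and i2: "i \<le> sz B1"
    and col: "Out B2 = In B1 i"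
begin

abbreviation "n \<equiv> sz B1"
abbreviation "m \<equiv> sz B2"
abbreviation "C \<equiv> cncb_comp B1 i B2"

lemma n2: "n \<ge> 2" and m2: "m \<ge> 2" using b1 b2 unfolding bubble_char by auto

lemma h1: "(a,b) \<in> blue B1 \<Longrightarrow> (1 \<le> a \<and> a \<le> n \<and> b = a+1) \<or> (a = 1 \<and> b = n + 1)"
  using bub_blue b1 by blast
lemma h2: "(a,b) \<in> blue B2 \<Longrightarrow> (1 \<le> a \<and> a \<le> m \<and> b = a+1) \<or> (a = 1 \<and> b = m + 1)"
  using bub_blue b2 by blast

lemma szC: "sz C = n + m - 1" and redC: "red C = {}"
  using comp_eq[OF b1 b2 i1 i2 col] by simp_all

lemma memb: "x \<in> blue C \<longleftrightarrow> x \<noteq> (i, i+m) \<and>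
   ((\<exists>a b. (a,b) \<in> blue B1 \<and> x = (sg i m a, sg i m b)) \<or> (\<exists>a b. (a,b) \<in> blue B2 \<and> x = (a+i-1, b+i-1)))"
  using comp_eq[OF b1 b2 i1 i2 col] by auto

lemma sg_le: "a \<le> i \<Longrightarrow> sg i m a = a" and sg_gt: "\<not> a \<le> i \<Longrightarrow> sg i m a = a + m - 1"
  by (simp_all add: sg_def)

lemma cls:
  assumes "x \<in> blue C"
  shows "(\<exists>a. (a,a+1) \<in> blue B1 \<and> 1 \<le> a \<and> a < i \<and> x = (a,a+1))
       \<or> (\<exists>a. (a,a+1) \<in> blue B1 \<and> i < a \<and> a \<le> n \<and> x = (a+m-1,a+m))
       \<or> ((1,n+1) \<in> blue B1 \<and> x = (1,n+m))
       \<or> (\<exists>a. (a,a+1) \<in> blue B2 \<and> 1 \<le> a \<and> a \<le> m \<and> x = (a+i-1,a+i))"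
proof -
  have g: "x \<noteq> (i, i+m)" using assms memb by blast
  from assms consider (A) a b where "(a,b) \<in> blue B1" "x = (sg i m a, sg i m b)"
    | (B) a b where "(a,b) \<in> blue B2" "x = (a+i-1, b+i-1)" using memb by blast
  then show ?thesis
  proof cases
    case A
    from h1[OF A(1)] show ?thesis
    proof
      assume e: "1 \<le> a \<and> a \<le> n \<and> b = a + 1"
      consider "a < i" | "a = i" | "a > i" by linarith
      then show ?thesis
      proof cases
        case 1 then have "x = (a, a+1)" using A e by (simp add: sg_le)
        then show ?thesis using 1 A e by blast
      next
        case 2 then have "x = (i, i+m)" using A e m2 by (simp add: sg_le sg_gt)
        then show ?thesis using g by blast
      next
        case 3 then have "x = (a+m-1, a+m)" using A e m2 by (simp add: sg_gt)
        then show ?thesis using 3 A e by blast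
      qed
    next
      assume e: "a = 1 \<and> b = n + 1"
      then have "x = (1, n+m)" using A i1 i2 m2 by (simp add: sg_le sg_gt)
      then show ?thesis using A e by blast
    qed
  next
    case B
    from h2[OF B(1)] show ?thesis
    proof
      assume e: "1 \<le> a \<and> a \<le> m \<and> b = a + 1"
      then have "x = (a+i-1, a+i)" using B i1 by simp
      then show ?thesis using B e by blast
    next
      assume e: "a = 1 \<and> b = m + 1"
      then have "x = (i, i+m)" using B i1 by simp
      then show ?thesis using g by blast
    qed
  qed
qed

lemma in1: "(a,a+1) \<in> blue B1 \<Longrightarrow> 1 \<le> a \<Longrightarrow> a < i \<Longrightarrow> (a,a+1) \<in> blue C"
  unfolding memb by (rule conjI, simp, rule disjI1, rule exI[of _ a], rule exI[of _ "a+1"], simp add: sg_le)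

lemma in2: "(a,a+1) \<in> blue B1 \<Longrightarrow> i < a \<Longrightarrow> (a+m-1,a+m) \<in> blue C"
  unfolding memb using m2 by (intro conjI, simp, intro disjI1 exI[of _ a] exI[of _ "a+1"], simp add: sg_gt)

lemma in3: "(1,n+1) \<in> blue B1 \<Longrightarrow> (1,n+m) \<in> blue C"
  unfolding memb using m2 n2 i1 i2 by (intro conjI, simp, intro disjI1 exI[of _ 1] exI[of _ "n+1"], simp add: sg_gt sg_le)

lemma in4: "(a,a+1) \<in> blue B2 \<Longrightarrow> 1 \<le> a \<Longrightarrow> a \<le> m \<Longrightarrow> (a+i-1,a+i) \<in> blue C"
proof -
  assume h: "(a,a+1) \<in> blue B2" "1 \<le> a" "a \<le> m"
  have "(a+i-1,a+i) \<noteq> (i, i+m)" using h m2 i1 by auto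
  moreover have "(a+i-1,a+i) = (a+i-1, (a+1)+i-1)" using i1 by simp
  ultimately show ?thesis unfolding memb using h by blast
qed

lemma bubC: "is_bubble C"
proof -
  have "\<forall>x\<in>blue C. eb (sz C) x"
  proof
    fix x assume "x \<in> blue C"
    from cls[OF this] show "eb (sz C) x" unfolding szC eb_def using n2 m2 i1 i2 by auto
  qed
  then show ?thesis unfolding bubble_char using szC redC n2 m2 by auto
qed

lemma basedC: "based C \<longleftrightarrow> based B1"
proof
  assume "based C"
  then have "(1, n+m) \<in> blue C" unfolding based_def szC using n2 m2
    by (metis Nat.add_diff_assoc2 add_diff_cancel_right' le_add1 le_trans one_le_numeral)
  from cls[OF this] show "based B1" unfolding based_def using n2 m2 i1 i2 by auto
next
  assume "based B1"
  then have "(1, n+m) \<in> blue C" using in3 unfolding based_def by blast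
  then show "based C" unfolding based_def szC using n2 m2 by simp
qed

lemma Q1: "1 \<le> j \<Longrightarrow> j < i \<Longrightarrow> (j,j+1) \<in> blue C \<longleftrightarrow> (j,j+1) \<in> blue B1"
  using cls[of "(j,j+1)"] in1[of j] n2 m2 i1 i2 by auto

lemma Q2: "i \<le> j \<Longrightarrow> j < i + m \<Longrightarrow> (j,j+1) \<in> blue C \<longleftrightarrow> (j-i+1,j-i+1+1) \<in> blue B2"
proof
  assume "i \<le> j" "j < i + m" "(j,j+1) \<in> blue C"
  from cls[OF this(3)] show "(j-i+1,j-i+1+1) \<in> blue B2" using n2 m2 i1 i2 \<open>i \<le> j\<close> \<open>j < i+m\<close> by auto
next
  assume h: "i \<le> j" "j < i + m" "(j-i+1,j-i+1+1) \<in> blue B2"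
  have "(j-i+1+i-1, j-i+1+i) \<in> blue C" by (rule in4[OF h(3)]) (use h in auto)
  moreover have "j-i+1+i-1 = j" "j-i+1+i = j+1" using h i1 by auto
  ultimately show "(j,j+1) \<in> blue C" by simp
qed

lemma Q3: "i + m \<le> j \<Longrightarrow> (j,j+1) \<in> blue C \<longleftrightarrow> (j-m+1,j-m+1+1) \<in> blue B1"
proof
  assume "i + m \<le> j" "(j,j+1) \<in> blue C"
  from cls[OF this(2)] show "(j-m+1,j-m+1+1) \<in> blue B1" using n2 m2 i1 i2 \<open>i + m \<le> j\<close> by auto
next
  assume h: "i + m \<le> j" "(j-m+1,j-m+1+1) \<in> blue B1"
  have "(j-m+1+m-1, j-m+1+m) \<in> blue C" by (rule in2[OF h(2)]) (use h m2 in auto)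
  moreover have "j-m+1+m-1 = j" "j-m+1+m = j+1" using h m2 by auto
  ultimately show "(j,j+1) \<in> blue C" by simp
qed

lemma InC: "In C j = (if j < i then In B1 j else if j < i + m then In B2 (j-i+1) else In B1 (j-m+1))"
  if "1 \<le> j"
  using Q1[OF that] Q2 Q3 unfolding In_def by auto

lemma OutC: "Out C = Out B1" unfolding Out_def using basedC by simp

end

lemma comp_bub:
  assumes "is_bubble B1" "is_bubble B2" "1 \<le> i" "i \<le> sz B1" "Out B2 = In B1 i"
  shows "is_bubble (cncb_comp B1 i B2)" "sz (cncb_comp B1 i B2) = sz B1 + sz B2 - 1"
    "Out (cncb_comp B1 i B2) = Out B1"
    "\<And>j. 1 \<le> j \<Longrightarrow> In (cncb_comp B1 i B2) j = (if j < i then In B1 j else if j < i + sz B2 then In B2 (j-i+1) else In B1 (j - sz B2 + 1))"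
proof -
  interpret cmp B1 B2 i using assms by unfold_locales
  show "is_bubble (cncb_comp B1 i B2)" "sz (cncb_comp B1 i B2) = sz B1 + sz B2 - 1"
    "Out (cncb_comp B1 i B2) = Out B1" using bubC szC OutC by auto
  show "\<And>j. 1 \<le> j \<Longrightarrow> In (cncb_comp B1 i B2) j = (if j < i then In B1 j else if j < i + sz B2 then In B2 (j-i+1) else In B1 (j - sz B2 + 1))"
    using InC by blast
qed

lemma In_iff: "In A k = In B k \<Longrightarrow> (k,k+1) \<in> blue A \<longleftrightarrow> (k,k+1) \<in> blue B" unfolding In_def
    by (cases "(k,k+1) \<in> blue A"; cases "(k,k+1) \<in> blue B"; simp)

lemma Out_iff: "Out A = Out B \<Longrightarrow> based A \<longleftrightarrow> based B" unfolding Out_def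
    by (cases "based A"; cases "based B"; simp)

lemma bubble_eq2:
  assumes "is_bubble A" "is_bubble B" "sz A = sz B" "Out A = Out B"
    "\<And>k. 1 \<le> k \<Longrightarrow> k \<le> sz A \<Longrightarrow> In A k = In B k"
  shows "A = B"
  by (rule bubble_eq[OF assms(1,2,3) Out_iff[OF assms(4)] In_iff[OF assms(5)]])

lemma sz2: "is_bubble B \<Longrightarrow> sz B \<ge> 2" unfolding bubble_char by simp

lemma seq_arith:
  fixes f g h :: "nat \<Rightarrow> nat"
  assumes "1 \<le> i" "1 \<le> j" "j \<le> m" "1 \<le> k" "1 \<le> p"
  shows "(if k<i then f k else if k < i+(m+p-1) then (if k-i+1<j then g (k-i+1) else if k-i+1<j+p then h (k-i+1-j+1) else g (k-i+1-p+1)) else f (k-(m+p-1)+1))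
   = (if k<i+j-1 then (if k<i then f k else if k<i+m then g (k-i+1) else f (k-m+1)) else if k<i+j-1+p then h (k-(i+j-1)+1) else (if k-p+1<i then f(k-p+1) else if k-p+1<i+m then g (k-p+1-i+1) else f (k-p+1-m+1)))"
proof -
  consider "k < i" | "i \<le> k" "k < i+j-1" | "i+j-1 \<le> k" "k < i+j-1+p" | "i+j-1+p \<le> k" "k < i+(m+p-1)" | "i+(m+p-1) \<le> k"
    by linarith
  then show ?thesis
  proof cases
    case 1
    have X: "k < i+j-1" "k < i" using assms 1 by linarith+
    show ?thesis using X by (simp only: if_True if_False simp_thms)
  next
    case 2
    have X: "\<not> k < i" "k < i+(m+p-1)" "k-i+1<j" "k < i+j-1" "k < i+m" using assms 2 by linarith+
    show ?thesis using X by (simp only: if_True if_False simp_thms)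
  next
    case 3
    have X: "\<not> k < i" "k < i+(m+p-1)" "\<not> k-i+1<j" "k-i+1<j+p" "\<not> k < i+j-1" "k<i+j-1+p" using assms 3 by linarith+
    have E: "k-i+1-j+1 = k-(i+j-1)+1" using assms 3 by linarith
    show ?thesis using X E by (simp only: if_True if_False simp_thms)
  next
    case 4
    have X: "\<not> k < i" "k < i+(m+p-1)" "\<not> k-i+1<j" "\<not> k-i+1<j+p" "\<not> k < i+j-1" "\<not> k<i+j-1+p"
       "\<not> k-p+1<i" "k-p+1<i+m" using assms 4 by linarith+
    have E: "k-i+1-p+1 = k-p+1-i+1" using assms 4 by linarith
    show ?thesis using X E by (simp only: if_True if_False simp_thms)
  next
    case 5
    have X: "\<not> k < i" "\<not> k < i+(m+p-1)" "\<not> k < i+j-1" "\<not> k<i+j-1+p"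
       "\<not> k-p+1<i" "\<not> k-p+1<i+m" using assms 5 by linarith+
    have E: "k-(m+p-1)+1 = k-p+1-m+1" using assms 5 by linarith
    show ?thesis using X E by (simp only: if_True if_False simp_thms)
  qed
qed
lemma par_arith:
  fixes f g h :: "nat \<Rightarrow> nat"
  assumes "1 \<le> i" "i < j" "1 \<le> k" "1 \<le> p" "1 \<le> m"
  shows "(if k < j+m-1 then (if k<i then f k else if k<i+m then g (k-i+1) else f (k-m+1)) else if k < j+m-1+p then h (k-(j+m-1)+1) else (if k-p+1<i then f (k-p+1) else if k-p+1<i+m then g (k-p+1-i+1) else f (k-p+1-m+1)))
   = (if k<i then (if k<j then f k else if k < j+p then h (k-j+1) else f (k-p+1)) else if k<i+m then g (k-i+1) else (if k-m+1<j then f (k-m+1) else if k-m+1 < j+p then h (k-m+1-j+1) else f (k-m+1-p+1)))"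
proof -
  consider "k < i" | "i \<le> k" "k < i+m" | "i+m \<le> k" "k < j+m-1" | "j+m-1 \<le> k" "k < j+m-1+p" | "j+m-1+p \<le> k"
    by linarith
  then show ?thesis
  proof cases
    case 1 have X: "k < j+m-1" "k < j" "k < i" using assms 1 by linarith+
    show ?thesis using X by (simp only: if_True if_False simp_thms)
  next
    case 2
    have X: "(\<not> k < i)" "(k < j+m-1)" "(k<i+m)" using assms 2 by linarith+
    show ?thesis using X by (simp only: if_True if_False simp_thms)
  next
    case 3
    have X: "(\<not> k < i)" "(\<not> k<i+m)" "(k < j+m-1)" "(k-m+1 < j)" using assms 3 by linarith+
    show ?thesis using X by (simp only: if_True if_False simp_thms)
  next
    case 4
    have X: "(\<not> k < i)" "(\<not> k<i+m)" "(\<not> k < j+m-1)" "(k < j+m-1+p)" "(\<not> k-m+1 < j)" "(k-m+1 < j+p)" using assms 4 by linarith+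
    have E: "(k-(j+m-1)+1 = k-m+1-j+1)" using assms 4 by linarith
    show ?thesis using X E by (simp only: if_True if_False simp_thms)
  next
    case 5
    have X: "(\<not> k < i)" "(\<not> k<i+m)" "(\<not> k < j+m-1)" "(\<not> k < j+m-1+p)" "(\<not> k-m+1 < j)" "(\<not> k-m+1 < j+p)" "(\<not> k-p+1<i)" "(\<not> k-p+1<i+m)" using assms 5 by linarith+
    have E: "(k-p+1-m+1 = k-m+1-p+1)" using assms 5 by linarith
    show ?thesis using X E by (simp only: if_True if_False simp_thms)
  qed
qed

lemma seq_assoc:
  assumes b: "is_bubble B1" "is_bubble B2" "is_bubble B3"
    and i: "1 \<le> i" "i \<le> sz B1" and j: "1 \<le> j" "j \<le> sz B2"
    and c: "Out B2 = In B1 i" "Out B3 = In B2 j"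
  shows "cncb_comp B1 i (cncb_comp B2 j B3) = cncb_comp (cncb_comp B1 i B2) (i + j - 1) B3"
proof -
  note L1 = comp_bub[OF b(2,3) j c(2)]
  have cL: "Out (cncb_comp B2 j B3) = In B1 i" using L1 c by simp
  note L = comp_bub[OF b(1) L1(1) i cL]
  note R1 = comp_bub[OF b(1,2) i c(1)]
  have cR: "Out B3 = In (cncb_comp B1 i B2) (i+j-1)" proof -
    have "\<not> i+j-1 < i" "i+j-1 < i + sz B2" "i+j-1-i+1 = j" "1 \<le> i+j-1" using i j by auto
    then show ?thesis using R1(4)[of "i+j-1"] c by simp
  qed
  have iR: "i + j - 1 \<le> sz (cncb_comp B1 i B2)" using R1(2) i j by simp
  have iR1: "1 \<le> i + j - 1" using i j by simp
  note R = comp_bub[OF R1(1) b(3) iR1 iR cR]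
  have s2: "sz B1 \<ge> 2" "sz B2 \<ge> 2" "sz B3 \<ge> 2" using b sz2 by auto
  show ?thesis
  proof (rule bubble_eq2[OF L(1) R(1)])
    show "sz (cncb_comp B1 i (cncb_comp B2 j B3)) = sz (cncb_comp (cncb_comp B1 i B2) (i + j - 1) B3)"
      using L(2) L1(2) R(2) R1(2) s2 by simp
    show "Out (cncb_comp B1 i (cncb_comp B2 j B3)) = Out (cncb_comp (cncb_comp B1 i B2) (i + j - 1) B3)"
      using L(3) R(3) R1(3) by simp
    fix k assume k: "1 \<le> k" "k \<le> sz (cncb_comp B1 i (cncb_comp B2 j B3))"
    have eL: "In (cncb_comp B1 i (cncb_comp B2 j B3)) k = (if k<i then In B1 k else if k < i+(sz B2+sz B3-1) then In (cncb_comp B2 j B3) (k-i+1) else In B1 (k-(sz B2+sz B3-1)+1))"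
      using L(4)[OF k(1)] by (simp only: L1(2))
    have eI23: "In (cncb_comp B2 j B3) (k-i+1) = (if k-i+1<j then In B2 (k-i+1) else if k-i+1<j+sz B3 then In B3 (k-i+1-j+1) else In B2 (k-i+1-sz B3+1))"
      by (rule L1(4)) simp
    have eR: "In (cncb_comp (cncb_comp B1 i B2) (i + j - 1) B3) k = (if k<i+j-1 then In (cncb_comp B1 i B2) k else if k<i+j-1+sz B3 then In B3 (k-(i+j-1)+1) else In (cncb_comp B1 i B2) (k-sz B3+1))"
      by (rule R(4)[OF k(1)])
    have eI12a: "In (cncb_comp B1 i B2) k = (if k<i then In B1 k else if k<i+sz B2 then In B2 (k-i+1) else In B1 (k-sz B2+1))"
      by (rule R1(4)[OF k(1)])
    have eI12b: "In (cncb_comp B1 i B2) (k-sz B3+1) = (if k-sz B3+1<i then In B1 (k-sz B3+1) else if k-sz B3+1<i+sz B2 then In B2 (k-sz B3+1-i+1) else In B1 (k-sz B3+1-sz B2+1))"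
      by (rule R1(4)) simp
    show "In (cncb_comp B1 i (cncb_comp B2 j B3)) k = In (cncb_comp (cncb_comp B1 i B2) (i + j - 1) B3) k"
      unfolding eL eI23 eR eI12a eI12b by (rule seq_arith) (use i j k s2 in auto)
  qed
qed

lemma par_assoc:
  assumes b: "is_bubble B1" "is_bubble B2" "is_bubble B3"
    and ij: "1 \<le> i" "i < j" "j \<le> sz B1"
    and c: "Out B2 = In B1 i" "Out B3 = In B1 j"
  shows "cncb_comp (cncb_comp B1 i B2) (j + sz B2 - 1) B3 = cncb_comp (cncb_comp B1 j B3) i B2"
proof -
  have s2: "sz B1 \<ge> 2" "sz B2 \<ge> 2" "sz B3 \<ge> 2" using b sz2 by auto
  have isz: "i \<le> sz B1" using ij by simp
  note L1 = comp_bub[OF b(1,2) ij(1) isz c(1)]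
  have cL: "Out B3 = In (cncb_comp B1 i B2) (j + sz B2 - 1)" proof -
    have "\<not> j + sz B2 - 1 < i" "\<not> j + sz B2 - 1 < i + sz B2" "j + sz B2 - 1 - sz B2 + 1 = j" "1 \<le> j + sz B2 - 1" using ij s2 by auto
    then show ?thesis using L1(4)[of "j + sz B2 - 1"] c by simp
  qed
  have a1: "1 \<le> j" using ij by auto
  note R1 = comp_bub[OF b(1,3) a1 ij(3) c(2)]
  have cR: "Out B2 = In (cncb_comp B1 j B3) i" using R1(4)[of i] c ij by simp
  have a2: "1 \<le> j + sz B2 - 1" "j + sz B2 - 1 \<le> sz (cncb_comp B1 i B2)" using ij s2 L1(2) by auto
  have a3: "i \<le> sz (cncb_comp B1 j B3)" using ij s2 R1(2) by auto
  note L = comp_bub[OF L1(1) b(3) a2 cL]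
  note R = comp_bub[OF R1(1) b(2) ij(1) a3 cR]
  show ?thesis
  proof (rule bubble_eq2[OF L(1) R(1)])
    show "sz (cncb_comp (cncb_comp B1 i B2) (j + sz B2 - 1) B3) = sz (cncb_comp (cncb_comp B1 j B3) i B2)"
      using L(2) L1(2) R(2) R1(2) s2 by simp
    show "Out (cncb_comp (cncb_comp B1 i B2) (j + sz B2 - 1) B3) = Out (cncb_comp (cncb_comp B1 j B3) i B2)"
      using L(3) R(3) R1(3) L1(3) by simp
    fix k assume k: "1 \<le> k" "k \<le> sz (cncb_comp (cncb_comp B1 i B2) (j + sz B2 - 1) B3)"
    have eL: "In (cncb_comp (cncb_comp B1 i B2) (j + sz B2 - 1) B3) k = (if k < j+sz B2-1 then In (cncb_comp B1 i B2) k else if k < j+sz B2-1+sz B3 then In B3 (k-(j+sz B2-1)+1) else In (cncb_comp B1 i B2) (k-sz B3+1))"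
      by (rule L(4)[OF k(1)])
    have eI12a: "In (cncb_comp B1 i B2) k = (if k<i then In B1 k else if k<i+sz B2 then In B2 (k-i+1) else In B1 (k-sz B2+1))"
      by (rule L1(4)[OF k(1)])
    have eI12b: "In (cncb_comp B1 i B2) (k-sz B3+1) = (if k-sz B3+1<i then In B1 (k-sz B3+1) else if k-sz B3+1<i+sz B2 then In B2 (k-sz B3+1-i+1) else In B1 (k-sz B3+1-sz B2+1))"
      by (rule L1(4)) simp
    have eR: "In (cncb_comp (cncb_comp B1 j B3) i B2) k = (if k<i then In (cncb_comp B1 j B3) k else if k<i+sz B2 then In B2 (k-i+1) else In (cncb_comp B1 j B3) (k-sz B2+1))"
      by (rule R(4)[OF k(1)])
    have eI13a: "In (cncb_comp B1 j B3) k = (if k<j then In B1 k else if k<j+sz B3 then In B3 (k-j+1) else In B1 (k-sz B3+1))"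
      by (rule R1(4)[OF k(1)])
    have eI13b: "In (cncb_comp B1 j B3) (k-sz B2+1) = (if k-sz B2+1<j then In B1 (k-sz B2+1) else if k-sz B2+1<j+sz B3 then In B3 (k-sz B2+1-j+1) else In B1 (k-sz B2+1-sz B3+1))"
      by (rule R1(4)) simp
    show "In (cncb_comp (cncb_comp B1 i B2) (j + sz B2 - 1) B3) k = In (cncb_comp (cncb_comp B1 j B3) i B2) k"
      unfolding eL eI12a eI12b eR eI13a eI13b by (rule par_arith) (use ij k s2 in auto)
  qed
qed


lemma Bulle_iff: "x \<in> Bulle \<longleftrightarrow> x = Unit 1 \<or> x = Unit 2 \<or> (\<exists>B. x = Bub B \<and> is_bubble B)"
  unfolding Bulle_def by auto

lemma bcomp_Bub_Bub: "bcomp (Bub B) i y = Bub (case y of Unit c \<Rightarrow> B | Bub B2 \<Rightarrow> cncb_comp B i B2)"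
  by (cases y) auto

lemma closure:
  assumes x: "x \<in> Bulle" and y: "y \<in> Bulle" and i: "1 \<le> i" "i \<le> arity x" and c: "out y = inp x i"
  shows "bcomp x i y \<in> Bulle
        \<and> arity (bcomp x i y) = arity x + arity y - 1
        \<and> out (bcomp x i y) = out x
        \<and> (\<forall>j. 1 \<le> j \<longrightarrow> j \<le> arity x + arity y - 1 \<longrightarrow>
             inp (bcomp x i y) j =
               (if j < i then inp x j
                else if j < i + arity y then inp y (j - i + 1)
                else inp x (j - arity y + 1)))"
proof (cases x)
  case (Unit c)
  then have i1: "i = 1" using i by simp
  have "out y = c" using c Unit by simp
  then show ?thesis using Unit i1 y by auto
next
  case (Bub B1)
  then have b1: "is_bubble B1" using x unfolding Bulle_iff by auto
  show ?thesis
  proof (cases y)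
    case (Unit c)
    have ci: "c = In B1 i" using c Unit Bub by simp
    show ?thesis
    proof (intro conjI allI impI)
      show "bcomp x i y \<in> Bulle" using Bub Unit x by simp
      show "arity (bcomp x i y) = arity x + arity y - 1" using Bub Unit by simp
      show "out (bcomp x i y) = out x" using Bub Unit by simp
      fix j assume j: "1 \<le> j" "j \<le> arity x + arity y - 1"
      consider "j < i" | "j = i" | "j > i" by linarith
      then show "inp (bcomp x i y) j = (if j < i then inp x j else if j < i + arity y then inp y (j - i + 1) else inp x (j - arity y + 1))"
      proof cases
        case 1 then show ?thesis using Bub Unit by simp
      next
        case 2 then show ?thesis using Bub Unit ci by simp
      next
        case 3 then show ?thesis using Bub Unit by simp
      qed
    qed
  next
    case (Bub B2)
    then have b2: "is_bubble B2" using y unfolding Bulle_iff by auto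
    have i': "i \<le> sz B1" and c': "Out B2 = In B1 i" using i c \<open>x = Bub B1\<close> Bub by auto
    note R = comp_bub[OF b1 b2 i(1) i' c']
    show ?thesis
    proof (intro conjI allI impI)
      show "bcomp x i y \<in> Bulle" using Bub \<open>x = Bub B1\<close> R(1) unfolding Bulle_iff by simp
      show "arity (bcomp x i y) = arity x + arity y - 1" using Bub \<open>x = Bub B1\<close> R(2) by simp
      show "out (bcomp x i y) = out x" using Bub \<open>x = Bub B1\<close> R(3) by simp
      fix j assume j: "1 \<le> j" "j \<le> arity x + arity y - 1"
      show "inp (bcomp x i y) j = (if j < i then inp x j else if j < i + arity y then inp y (j - i + 1) else inp x (j - arity y + 1))"
        using Bub \<open>x = Bub B1\<close> R(4)[OF j(1)] by simp
    qed
  qed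
qed

lemma seq_all:
  assumes x: "x \<in> Bulle" and y: "y \<in> Bulle" and z: "z \<in> Bulle"
    and ij: "1 \<le> i" "i \<le> arity x" "1 \<le> j" "j \<le> arity y"
    and c: "out y = inp x i" "out z = inp y j"
  shows "bcomp x i (bcomp y j z) = bcomp (bcomp x i y) (i + j - 1) z"
proof (cases x)
  case (Unit c)
  then have "i = 1" using ij by simp
  then show ?thesis using Unit by simp
next
  case (Bub B1)
  then have b1: "is_bubble B1" using x unfolding Bulle_iff by auto
  show ?thesis
  proof (cases y)
    case (Unit c)
    then have "j = 1" using ij by simp
    then show ?thesis using Unit Bub by simp
  next
    case (Bub B2)
    then have b2: "is_bubble B2" using y unfolding Bulle_iff by auto
    show ?thesis
    proof (cases z)
      case (Unit c)
      then show ?thesis using Bub \<open>x = Bub B1\<close> by simp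
    next
      case (Bub B3)
      then have b3: "is_bubble B3" using z unfolding Bulle_iff by auto
      have h: "i \<le> sz B1" "j \<le> sz B2" "Out B2 = In B1 i" "Out B3 = In B2 j"
        using ij c \<open>x = Bub B1\<close> \<open>y = Bub B2\<close> Bub by auto
      show ?thesis using seq_assoc[OF b1 b2 b3 ij(1) h(1) ij(3) h(2) h(3) h(4)] \<open>x = Bub B1\<close> \<open>y = Bub B2\<close> Bub
        by simp
    qed
  qed
qed

lemma par_all:
  assumes x: "x \<in> Bulle" and y: "y \<in> Bulle" and z: "z \<in> Bulle"
    and ij: "1 \<le> i" "i < j" "j \<le> arity x"
    and c: "out y = inp x i" "out z = inp x j"
  shows "bcomp (bcomp x i y) (j + arity y - 1) z = bcomp (bcomp x j z) i y"
proof (cases x)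
  case (Unit c)
  then show ?thesis using ij by simp
next
  case (Bub B1)
  then have b1: "is_bubble B1" using x unfolding Bulle_iff by auto
  show ?thesis
  proof (cases y)
    case (Unit c)
    then show ?thesis using Bub by (cases z) simp_all
  next
    case (Bub B2)
    then have b2: "is_bubble B2" using y unfolding Bulle_iff by auto
    show ?thesis
    proof (cases z)
      case (Unit c)
      then show ?thesis using Bub \<open>x = Bub B1\<close> by simp
    next
      case (Bub B3)
      then have b3: "is_bubble B3" using z unfolding Bulle_iff by auto
      have h: "j \<le> sz B1" "Out B2 = In B1 i" "Out B3 = In B1 j"
        using ij c \<open>x = Bub B1\<close> \<open>y = Bub B2\<close> Bub by auto
      show ?thesis using par_assoc[OF b1 b2 b3 ij(1,2) h] \<open>x = Bub B1\<close> \<open>y = Bub B2\<close> Bub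
        by simp
    qed
  qed
qed


theorem proposition2p2:
  shows
    \<comment> \<open>in particular: the CNCB-composite of bubbles with matching colours is a bubble\<close>
    "(\<forall>B1 B2 i. is_bubble B1 \<longrightarrow> is_bubble B2 \<longrightarrow> 1 \<le> i \<longrightarrow> i \<le> sz B1 \<longrightarrow>
        Out B2 = In B1 i \<longrightarrow> is_bubble (cncb_comp B1 i B2))
   \<and> \<comment> \<open>closure and colour/arity compatibility of the partial composition\<close>
     (\<forall>x \<in> Bulle. \<forall>y \<in> Bulle. \<forall>i. 1 \<le> i \<longrightarrow> i \<le> arity x \<longrightarrow> out y = inp x i \<longrightarrow>
        bcomp x i y \<in> Bulle
        \<and> arity (bcomp x i y) = arity x + arity y - 1
        \<and> out (bcomp x i y) = out x
        \<and> (\<forall>j. 1 \<le> j \<longrightarrow> j \<le> arity x + arity y - 1 \<longrightarrow>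
             inp (bcomp x i y) j =
               (if j < i then inp x j
                else if j < i + arity y then inp y (j - i + 1)
                else inp x (j - arity y + 1))))
   \<and> \<comment> \<open>units\<close>
     (\<forall>c \<in> {1, 2}. arity (Unit c) = 1 \<and> out (Unit c) = c \<and> inp (Unit c) 1 = c)
   \<and> (\<forall>x \<in> Bulle. bcomp (Unit (out x)) 1 x = x
        \<and> (\<forall>i. 1 \<le> i \<longrightarrow> i \<le> arity x \<longrightarrow> bcomp x i (Unit (inp x i)) = x))
   \<and> \<comment> \<open>sequential associativity\<close>
     (\<forall>x \<in> Bulle. \<forall>y \<in> Bulle. \<forall>z \<in> Bulle. \<forall>i j.
        1 \<le> i \<longrightarrow> i \<le> arity x \<longrightarrow> 1 \<le> j \<longrightarrow> j \<le> arity y \<longrightarrow>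
        out y = inp x i \<longrightarrow> out z = inp y j \<longrightarrow>
        bcomp x i (bcomp y j z) = bcomp (bcomp x i y) (i + j - 1) z)
   \<and> \<comment> \<open>parallel associativity\<close>
     (\<forall>x \<in> Bulle. \<forall>y \<in> Bulle. \<forall>z \<in> Bulle. \<forall>i j.
        1 \<le> i \<longrightarrow> i < j \<longrightarrow> j \<le> arity x \<longrightarrow>
        out y = inp x i \<longrightarrow> out z = inp x j \<longrightarrow>
        bcomp (bcomp x i y) (j + arity y - 1) z = bcomp (bcomp x j z) i y)"
  proof (intro conjI)
  show "\<forall>B1 B2 i. is_bubble B1 \<longrightarrow> is_bubble B2 \<longrightarrow> 1 \<le> i \<longrightarrow> i \<le> sz B1 \<longrightarrow>
        Out B2 = In B1 i \<longrightarrow> is_bubble (cncb_comp B1 i B2)"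
    using comp_bub(1) by blast
  show "\<forall>x \<in> Bulle. \<forall>y \<in> Bulle. \<forall>i. 1 \<le> i \<longrightarrow> i \<le> arity x \<longrightarrow> out y = inp x i \<longrightarrow>
        bcomp x i y \<in> Bulle
        \<and> arity (bcomp x i y) = arity x + arity y - 1
        \<and> out (bcomp x i y) = out x
        \<and> (\<forall>j. 1 \<le> j \<longrightarrow> j \<le> arity x + arity y - 1 \<longrightarrow>
             inp (bcomp x i y) j =
               (if j < i then inp x j
                else if j < i + arity y then inp y (j - i + 1)
                else inp x (j - arity y + 1)))"
    using closure by blast
  show "\<forall>c \<in> {1, 2}. arity (Unit c) = 1 \<and> out (Unit c) = c \<and> inp (Unit c) 1 = c" by simp
  show "\<forall>x \<in> Bulle. bcomp (Unit (out x)) 1 x = x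
        \<and> (\<forall>i. 1 \<le> i \<longrightarrow> i \<le> arity x \<longrightarrow> bcomp x i (Unit (inp x i)) = x)"
  proof (intro ballI conjI allI impI)
    fix x i show "bcomp (Unit (out x)) 1 x = x" by simp
    show "bcomp x i (Unit (inp x i)) = x" by (cases x) simp_all
  qed
  show "\<forall>x \<in> Bulle. \<forall>y \<in> Bulle. \<forall>z \<in> Bulle. \<forall>i j.
        1 \<le> i \<longrightarrow> i \<le> arity x \<longrightarrow> 1 \<le> j \<longrightarrow> j \<le> arity y \<longrightarrow>
        out y = inp x i \<longrightarrow> out z = inp y j \<longrightarrow>
        bcomp x i (bcomp y j z) = bcomp (bcomp x i y) (i + j - 1) z"
    using seq_all by blast
  show "\<forall>x \<in> Bulle. \<forall>y \<in> Bulle. \<forall>z \<in> Bulle. \<forall>i j.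
        1 \<le> i \<longrightarrow> i < j \<longrightarrow> j \<le> arity x \<longrightarrow>
        out y = inp x i \<longrightarrow> out z = inp x j \<longrightarrow>
        bcomp (bcomp x i y) (j + arity y - 1) z = bcomp (bcomp x j z) i y"
    using par_all by blast
qed

end
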